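(* Let $Q=(q_n)_{n\ge1}$ be a basic sequence that is infinite in limit, and suppose there exist constants $M$ and $t$ such that $\nu_{i+1}-\nu_i\le Mi$ for all $i>t$. Then for every $Q$-special sequence $F$ and every real $\psi>1$, $$D_n^*(y_F)<\psi\cdot\sqrt{2\lceil M+1\rceil}\cdot\left(2\lceil M+1\rceil+1\right)\cdot n^{-1/2}$$ for all sufficiently large $n$.
   Context: A basic sequence is a sequence $Q=(q_n)_{n\ge1}$ of integers with $q_n\ge 2$; it is infinite in limit if $q_n\to\infty$. $\mathbb{N}$ denotes the positive integers. For each positive integer $j$ let $\nu_j=\min\{N : q_m\ge 2j^2 \text{ for all } m\ge N\}$. Define $l_1=\max(\nu_2-1,1)$ and, recursively for $i\ge 2$, $l_i=\max\big(\min\{k\in\mathbb{N} : l_1+2l_2+\cdots+(i-1)l_{i-1}+ik\ge \nu_{i+1}-1\},1\big)$. Put $L_i=\sum_{j=1}^i jl_j$ (with $L_0=0$). Let $S_Q=\{(a,b,c)\in\mathbb{N}^3 : b\le l_a,\ c\le a\}$ and $\phi_Q(a,b,c)=L_{a-1}+(b-1)a+c$; $\phi_Q$ is a bijection $S_Q\to\mathbb{N}$. A $Q$-special sequence is a family of integers $F=(F_{(a,b,c)})_{(a,b,c)\in S_Q}$ with $F_{(a,b,1)}=0$ for all $(a,b,1)\in S_Q$ and $\frac{F_{(a,b,c)}}{q_{\phi_Q(a,b,c)}}\in\left[\frac{c-1}{a}-\frac{1}{2a^2},\frac{c-1}{a}+\frac{1}{2a^2}\right]$ for $(a,b,c)\in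 S_Q$ with $c>1$. For such $F$ put $E_{F,n}=F_{\phi_Q^{-1}(n)}$ and let $y_F$ be the sequence $\left(E_{F,n}/q_n\right)_{n=1}^\infty$. For a sequence $w=(w_1,w_2,\dots)$ in $[0,1)$, the star discrepancy is $D_n^*(w)=\sup_{0<\gamma\le1}\left|\frac{\#\{1\le k\le n: w_k\in[0,\gamma)\}}{n}-\gamma\right|$. *)

theory Defs
  imports "HOL-Analysis.Analysis"
begin

text \<open>A basic sequence q = (q_n)_{n>=1}; values at index 0 are irrelevant.\<close>
definition basic_seq :: "(nat \<Rightarrow> int) \<Rightarrow> bool" where
  "basic_seq q \<longleftrightarrow> (\<forall>n\<ge>1. q n \<ge> 2)"

definition infinite_in_limit :: "(nat \<Rightarrow> int) \<Rightarrow> bool" where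
  "infinite_in_limit q \<longleftrightarrow> filterlim q at_top sequentially"

definition nu :: "(nat \<Rightarrow> int) \<Rightarrow> nat \<Rightarrow> nat" where
  "nu q j = (LEAST N::nat. N \<ge> 1 \<and> (\<forall>m\<ge>N. q m \<ge> 2 * int j ^ 2))"

primrec lL :: "(nat \<Rightarrow> int) \<Rightarrow> nat \<Rightarrow> nat \<times> nat" where
  "lL q 0 = (0, 0)"
| "lL q (Suc i) =
    (let Lp = snd (lL q i);
         li = (if i = 0 then max (nu q 2 - 1) 1
               else max (LEAST k::nat. k \<ge> 1 \<and> Lp + Suc i * k \<ge> nu q (Suc i + 1) - 1) 1)
     in (li, Lp + Suc i * li))"

definition l_seq :: "(nat \<Rightarrow> int) \<Rightarrow> nat \<Rightarrow> nat" where
  "l_seq q i = fst (lL q i)"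

definition L_seq :: "(nat \<Rightarrow> int) \<Rightarrow> nat \<Rightarrow> nat" where
  "L_seq q i = snd (lL q i)"

definition S_Q :: "(nat \<Rightarrow> int) \<Rightarrow> (nat \<times> nat \<times> nat) set" where
  "S_Q q = {(a, b, c). a \<ge> 1 \<and> b \<ge> 1 \<and> c \<ge> 1 \<and> b \<le> l_seq q a \<and> c \<le> a}"

definition phi_Q :: "(nat \<Rightarrow> int) \<Rightarrow> nat \<times> nat \<times> nat \<Rightarrow> nat" where
  "phi_Q q s = (case s of (a, b, c) \<Rightarrow> L_seq q (a - 1) + (b - 1) * a + c)"

definition phi_Q_inv :: "(nat \<Rightarrow> int) \<Rightarrow> nat \<Rightarrow> nat \<times> nat \<times> nat" where
  "phi_Q_inv q n = (THE s. s \<in> S_Q q \<and> phi_Q q s = n)"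

definition Q_special :: "(nat \<Rightarrow> int) \<Rightarrow> (nat \<times> nat \<times> nat \<Rightarrow> int) \<Rightarrow> bool" where
  "Q_special q F \<longleftrightarrow>
     (\<forall>a b. (a, b, 1) \<in> S_Q q \<longrightarrow> F (a, b, 1) = 0) \<and>
     (\<forall>a b c. (a, b, c) \<in> S_Q q \<and> c > 1 \<longrightarrow>
        real_of_int (F (a, b, c)) / real_of_int (q (phi_Q q (a, b, c)))
          \<in> {(real c - 1) / real a - 1 / (2 * real a ^ 2) ..
             (real c - 1) / real a + 1 / (2 * real a ^ 2)})"

definition E_F :: "(nat \<Rightarrow> int) \<Rightarrow> (nat \<times> nat \<times> nat \<Rightarrow> int) \<Rightarrow> nat \<Rightarrow> int" where
  "E_F q F n = F (phi_Q_inv q n)"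

text \<open>y_F as a sequence indexed from 1.\<close>
definition y_F :: "(nat \<Rightarrow> int) \<Rightarrow> (nat \<times> nat \<times> nat \<Rightarrow> int) \<Rightarrow> nat \<Rightarrow> real" where
  "y_F q F n = real_of_int (E_F q F n) / real_of_int (q n)"

definition star_discrepancy :: "(nat \<Rightarrow> real) \<Rightarrow> nat \<Rightarrow> real" where
  "star_discrepancy w n =
     (SUP \<gamma>\<in>{0<..1}. \<bar>real (card {k \<in> {1..n}. w k \<in> {0..<\<gamma>}}) / real n - \<gamma>\<bar>)"

end

theory Submission
  imports Defs
begin

lemma l_Suc: "l_seq q (Suc i) = (if i = 0 then max (nu q 2 - 1) 1
   else max (LEAST k::nat. k \<ge> 1 \<and> L_seq q i + Suc i * k \<ge> nu q (Suc i + 1) - 1) 1)"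
  by (simp add: l_seq_def L_seq_def Let_def)

lemma L_Suc: "L_seq q (Suc i) = L_seq q i + Suc i * l_seq q (Suc i)"
  by (simp add: l_seq_def L_seq_def Let_def)

lemma L_0[simp]: "L_seq q 0 = 0" by (simp add: L_seq_def)

lemma l_pos: "i \<ge> 1 \<Longrightarrow> l_seq q i \<ge> 1"
  by (cases i) (auto simp: l_Suc)

lemma L_less_Suc: "L_seq q i < L_seq q (Suc i)"
  using l_pos[of "Suc i" q] by (simp add: L_Suc)

lemma L_strict: "strict_mono (L_seq q)"
  by (rule strict_monoI_Suc) (rule L_less_Suc)

lemma L_quad: "i * (i+1) \<le> 2 * L_seq q i"
proof (induction i)
  case (Suc i)
  have "Suc i * 1 \<le> Suc i * l_seq q (Suc i)" using l_pos[of "Suc i" q] by (intro mult_le_mono2) simp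
  then show ?case using Suc by (simp add: L_Suc algebra_simps)
qed simp

lemma L_block: "a \<ge> 1 \<Longrightarrow> L_seq q a = L_seq q (a-1) + a * l_seq q a"
  by (cases a) (auto simp: L_Suc)


lemma L_mono_le: "i \<le> j \<Longrightarrow> L_seq q i \<le> L_seq q j"
  using L_strict strict_mono_less_eq by blast

lemma L_mono_less: "i < j \<Longrightarrow> L_seq q i < L_seq q j"
  using L_strict strict_mono_less by blast

lemma phi_range:
  assumes "(a,b,c) \<in> S_Q q"
  shows "L_seq q (a-1) < phi_Q q (a,b,c)" "phi_Q q (a,b,c) \<le> L_seq q a"
proof -
  from assms have a: "a \<ge> 1" "b \<ge> 1" "c \<ge> 1" "b \<le> l_seq q a" "c \<le> a" by (auto simp: S_Q_def)
  show "L_seq q (a-1) < phi_Q q (a,b,c)" using a by (simp add: phi_Q_def)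
  have "(b-1)*a + c \<le> (b-1)*a + a" using a by simp
  also have "\<dots> = b * a" using a by (cases b) auto
  also have "\<dots> \<le> l_seq q a * a" using a by simp
  finally show "phi_Q q (a,b,c) \<le> L_seq q a" using L_block[of a q] a by (simp add: phi_Q_def mult.commute)
qed

lemma phi_inj:
  assumes "(a,b,c) \<in> S_Q q" "(a',b',c') \<in> S_Q q" "phi_Q q (a,b,c) = phi_Q q (a',b',c')"
  shows "(a,b,c) = (a',b',c')"
proof -
  have aa: "a = a'"
  proof (rule ccontr)
    assume "a \<noteq> a'"
    then consider "a < a'" | "a' < a" by linarith
    then show False
    proof cases
      case 1
      then have "L_seq q a \<le> L_seq q (a'-1)" by (intro L_mono_le) simp
      then show ?thesis using phi_range[OF assms(1)] phi_range[OF assms(2)] assms(3) by linarith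
    next
      case 2
      then have "L_seq q a' \<le> L_seq q (a-1)" by (intro L_mono_le) simp
      then show ?thesis using phi_range[OF assms(1)] phi_range[OF assms(2)] assms(3) by linarith
    qed
  qed
  from assms have a: "a \<ge> 1" "b \<ge> 1" "c \<ge> 1" "c \<le> a" "b' \<ge> 1" "c' \<ge> 1" "c' \<le> a" 
    using aa by (auto simp: S_Q_def)
  have e: "(b-1)*a + c = (b'-1)*a + c'" using assms(3) aa by (simp add: phi_Q_def)
  have bb: "b = b'"
  proof (rule ccontr)
    assume "b \<noteq> b'"
    then consider "b < b'" | "b' < b" by linarith
    then show False
    proof cases
      case 1
      then have "b \<le> b' - 1" by simp
      then have "b * a \<le> (b'-1)*a" by simp
      moreover have "(b-1)*a + c \<le> b * a" using a by (cases b) auto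
      ultimately show ?thesis using e a by linarith
    next
      case 2
      then have "b' \<le> b - 1" by simp
      then have "b' * a \<le> (b-1)*a" by simp
      moreover have "(b'-1)*a + c' \<le> b' * a" using a by (cases b') auto
      ultimately show ?thesis using e a by linarith
    qed
  qed
  show ?thesis using aa bb e by simp
qed

lemma phi_inv:
  assumes "a \<ge> 1" "1 \<le> b" "b \<le> l_seq q a" "1 \<le> c" "c \<le> a"
  shows "phi_Q_inv q (L_seq q (a-1) + (b-1)*a + c) = (a,b,c)"
proof -
  have m: "(a,b,c) \<in> S_Q q" using assms by (simp add: S_Q_def)
  have p: "phi_Q q (a,b,c) = L_seq q (a-1) + (b-1)*a + c" by (simp add: phi_Q_def)
  show ?thesis unfolding phi_Q_inv_def
  proof (rule the_equality)
    show "(a,b,c) \<in> S_Q q \<and> phi_Q q (a,b,c) = L_seq q (a-1) + (b-1)*a + c" using m p by simp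
  next
    fix s assume "s \<in> S_Q q \<and> phi_Q q s = L_seq q (a - 1) + (b - 1) * a + c"
    then show "s = (a,b,c)" using phi_inj[of "fst s" "fst (snd s)" "snd (snd s)" q a b c] m p
      by (cases s) auto
  qed
qed

lemma block_exists:
  assumes "n \<ge> 1"
  shows "\<exists>a\<ge>1. L_seq q (a-1) < n \<and> n \<le> L_seq q a"
proof -
  have ex: "\<exists>a. n \<le> L_seq q a"
  proof
    have "n * 2 \<le> n * (n+1)" using assms by (intro mult_le_mono2) simp
    then show "n \<le> L_seq q n" using L_quad[of n q] by linarith
  qed
  define a where "a = (LEAST a. n \<le> L_seq q a)"
  have 1: "n \<le> L_seq q a" unfolding a_def by (rule LeastI_ex[OF ex])
  have 2: "a \<noteq> 0" using 1 assms by (cases a) auto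
  have 3: "\<not> n \<le> L_seq q (a-1)" unfolding a_def
    by (rule not_less_Least) (use 2 in \<open>simp add: a_def\<close>)
  show ?thesis using 1 2 3 by (intro exI[of _ a]) auto
qed



lemma nu_ex:
  assumes "infinite_in_limit q"
  shows "\<exists>N::nat. N \<ge> 1 \<and> (\<forall>m\<ge>N. q m \<ge> 2 * int j ^ 2)"
proof -
  have "eventually (\<lambda>m. 2 * int j ^ 2 \<le> q m) sequentially"
    using assms unfolding infinite_in_limit_def filterlim_at_top by blast
  then obtain N where "\<forall>m\<ge>N. 2 * int j ^ 2 \<le> q m" by (auto simp: eventually_sequentially)
  then show ?thesis by (intro exI[of _ "max N 1"]) auto
qed

lemma nu_mono:
  assumes "infinite_in_limit q"
  shows "nu q j \<le> nu q (Suc j)"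
proof -
  have P: "nu q (Suc j) \<ge> 1 \<and> (\<forall>m\<ge>nu q (Suc j). q m \<ge> 2 * int (Suc j) ^ 2)"
    unfolding nu_def by (rule LeastI_ex[OF nu_ex[OF assms]])
  have "2 * int j ^ 2 \<le> 2 * int (Suc j) ^ 2" by (simp add: power_mono)
  then have "nu q (Suc j) \<ge> 1 \<and> (\<forall>m\<ge>nu q (Suc j). q m \<ge> 2 * int j ^ 2)"
    using P by (meson order_trans)
  then show ?thesis unfolding nu_def[of q j] by (rule Least_le)
qed

lemma least_k_prop:
  "(LEAST k::nat. k \<ge> 1 \<and> Lp + Suc i * k \<ge> N - 1) \<ge> 1 \<and>
   Lp + Suc i * (LEAST k::nat. k \<ge> 1 \<and> Lp + Suc i * k \<ge> N - 1) \<ge> N - 1"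
proof (rule LeastI[of _ "N + 1"])
  have "N + 1 \<le> Suc i * (N + 1)" by simp
  then show "N + 1 \<ge> 1 \<and> Lp + Suc i * (N + 1) \<ge> N - 1" by linarith
qed

lemma L_ge_nu: "i \<ge> 1 \<Longrightarrow> nu q (Suc i) - 1 \<le> L_seq q i"
proof (cases i)
  case (Suc i')
  show ?thesis
  proof (cases "i' = 0")
    case True
    then show ?thesis using Suc by (simp add: L_Suc l_Suc numeral_2_eq_2)
  next
    case False
    let ?k = "LEAST k::nat. k \<ge> 1 \<and> L_seq q i' + Suc i' * k \<ge> nu q (Suc i' + 1) - 1"
    have lk: "l_seq q (Suc i') = max ?k 1" using False by (simp add: l_Suc)
    have kp: "?k \<ge> 1 \<and> L_seq q i' + Suc i' * ?k \<ge> nu q (Suc i' + 1) - 1" by (rule least_k_prop)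
    have "?k \<le> l_seq q (Suc i')" using lk by linarith
    then have "Suc i' * ?k \<le> Suc i' * l_seq q (Suc i')" by (rule mult_le_mono2)
    then show ?thesis using kp Suc by (simp add: L_Suc)
  qed
qed auto

lemma l_bound:
  assumes "i \<ge> 1" "real (nu q (Suc i + 1)) - real (nu q (Suc i)) \<le> M * real (Suc i)"
  shows "l_seq q (Suc i) = 1 \<or> real (l_seq q (Suc i)) < M + 1"
proof -
  let ?P = "\<lambda>k::nat. k \<ge> 1 \<and> L_seq q i + Suc i * k \<ge> nu q (Suc i + 1) - 1"
  let ?k = "LEAST k::nat. ?P k"
  have lk: "l_seq q (Suc i) = max ?k 1" using assms by (simp add: l_Suc)
  have kp: "?P ?k" by (rule least_k_prop)
  have lk2: "l_seq q (Suc i) = ?k" using lk kp by simp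
  show ?thesis
  proof (cases "?k = 1")
    case True then show ?thesis using lk2 by simp
  next
    case False
    then have k2: "?k \<ge> 2" using kp by linarith
    have "\<not> ?P (?k - 1)" by (rule not_less_Least) (use k2 in simp)
    then have c1: "L_seq q i + Suc i * (?k - 1) + 1 < nu q (Suc i + 1)" using k2 by auto
    have c2: "nu q (Suc i) \<le> L_seq q i + 1" using L_ge_nu[OF assms(1), of q] by linarith
    have "real (L_seq q i) + real (Suc i) * (real ?k - 1) + 1 < real (nu q (Suc i + 1))"
      using c1 k2 by (metis (no_types, lifting) Nat.add_diff_assoc2 le_add_diff_inverse2 Nat.diff_add_assoc One_nat_def Suc_1 Suc_leD of_nat_1 of_nat_add of_nat_diff of_nat_less_iff of_nat_mult)
    moreover have "real (nu q (Suc i)) \<le> real (L_seq q i) + 1" using c2 by linarith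
    ultimately have "real (Suc i) * (real ?k - 1) < M * real (Suc i)" using assms(2) by linarith
    then have "real ?k - 1 < M" by (metis mult.commute mult_less_cancel_left_pos of_nat_0_less_iff zero_less_Suc)
    then show ?thesis using lk2 by simp
  qed
qed



lemma card_lt_upper:
  assumes "0 \<le> x"
  shows "real (card {c\<in>{1..a::nat}. real c - 1 < x}) \<le> x + 1"
proof -
  have "{c\<in>{1..a::nat}. real c - 1 < x} \<subseteq> {1..nat \<lceil>x\<rceil>}"
  proof
    fix c assume "c \<in> {c\<in>{1..a::nat}. real c - 1 < x}"
    then have "c \<ge> 1" "real c < x + 1" by auto
    then have "int c \<le> \<lceil>x\<rceil>" by linarith
    then show "c \<in> {1..nat \<lceil>x\<rceil>}" using \<open>c \<ge> 1\<close> by auto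
  qed
  then have "card {c\<in>{1..a::nat}. real c - 1 < x} \<le> card {1..nat \<lceil>x\<rceil>}"
    by (intro card_mono) auto
  also have "\<dots> = nat \<lceil>x\<rceil>" by simp
  finally have "real (card {c\<in>{1..a::nat}. real c - 1 < x}) \<le> real (nat \<lceil>x\<rceil>)" by linarith
  also have "\<dots> \<le> x + 1" using assms by linarith
  finally show ?thesis .
qed

lemma card_lt_lower:
  assumes "x \<le> real a"
  shows "x \<le> real (card {c\<in>{1..a::nat}. real c - 1 < x})"
proof -
  have "{1..nat \<lceil>x\<rceil>} \<subseteq> {c\<in>{1..a::nat}. real c - 1 < x}"
  proof
    fix c assume c: "c \<in> {1..nat \<lceil>x\<rceil>}"
    then have "c \<ge> 1" "int c \<le> \<lceil>x\<rceil>" by auto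
    moreover have "\<lceil>x\<rceil> \<le> int a" using assms by linarith
    ultimately show "c \<in> {c\<in>{1..a::nat}. real c - 1 < x}" by simp linarith
  qed
  then have "card {1..nat \<lceil>x\<rceil>} \<le> card {c\<in>{1..a::nat}. real c - 1 < x}"
    by (intro card_mono) auto
  then have "real (nat \<lceil>x\<rceil>) \<le> real (card {c\<in>{1..a::nat}. real c - 1 < x})" by simp
  moreover have "x \<le> real (nat \<lceil>x\<rceil>)" by linarith
  ultimately show ?thesis by linarith
qed

lemma pattern_count:
  fixes x :: "nat \<Rightarrow> real" and a :: nat
  assumes a: "a \<ge> 1" and g: "0 < \<gamma>" "\<gamma> \<le> 1"
    and hx: "\<And>c. c \<in> {1..a} \<Longrightarrow> 0 \<le> x c \<and> \<bar>x c - (real c - 1) / real a\<bar> \<le> 1 / (2 * real a ^ 2)"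
  shows "\<bar>real (card {c\<in>{1..a}. x c \<in> {0..<\<gamma>}}) - real a * \<gamma>\<bar> \<le> 2"
proof -
  have ra: "real a \<ge> 1" using a by simp
  let ?S = "{c\<in>{1..a}. x c \<in> {0..<\<gamma>}}"
  let ?hi = "real a * \<gamma> + 1 / (2 * real a)"
  let ?lo = "real a * \<gamma> - 1 / (2 * real a)"
  have key: "\<bar>real a * x c - (real c - 1)\<bar> \<le> 1 / (2 * real a)" if "c \<in> {1..a}" for c
  proof -
    have "\<bar>x c - (real c - 1) / real a\<bar> \<le> 1 / (2 * real a ^ 2)" using hx[OF that] by simp
    then have "real a * \<bar>x c - (real c - 1) / real a\<bar> \<le> real a * (1 / (2 * real a ^ 2))"
      using ra by (intro mult_left_mono) auto
    moreover have "real a * \<bar>x c - (real c - 1) / real a\<bar> = \<bar>real a * x c - (real c - 1)\<bar>"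
    proof -
      have "real a * \<bar>x c - (real c - 1) / real a\<bar> = \<bar>real a * (x c - (real c - 1) / real a)\<bar>"
        using ra by (simp add: abs_mult)
      also have "real a * (x c - (real c - 1) / real a) = real a * x c - (real c - 1)"
        using ra by (simp add: field_simps)
      finally show ?thesis .
    qed
    moreover have "real a * (1 / (2 * real a ^ 2)) = 1 / (2 * real a)"
      using ra by (simp add: power2_eq_square)
    ultimately show ?thesis by simp
  qed
  have sub1: "?S \<subseteq> {c\<in>{1..a}. real c - 1 < ?hi}"
  proof
    fix c assume "c \<in> ?S"
    then have c: "c \<in> {1..a}" "x c < \<gamma>" by auto
    have "real a * x c < real a * \<gamma>" using c ra by simp
    moreover have "- (1 / (2 * real a)) \<le> real a * x c - (real c - 1)" using key[OF c(1)] by (simp add: abs_le_iff)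
    ultimately have "real c - 1 < ?hi" by linarith
    then show "c \<in> {c\<in>{1..a}. real c - 1 < ?hi}" using c(1) by auto
  qed
  have sub2: "{c\<in>{1..a}. real c - 1 < ?lo} \<subseteq> ?S"
  proof
    fix c assume "c \<in> {c\<in>{1..a}. real c - 1 < ?lo}"
    then have c: "c \<in> {1..a}" "real c - 1 < ?lo" by auto
    have "real a * x c - (real c - 1) \<le> 1 / (2 * real a)" using key[OF c(1)] by (simp add: abs_le_iff)
    then have "real a * x c < real a * \<gamma>" using c(2) by linarith
    then have "x c < \<gamma>" using ra by simp
    then show "c \<in> ?S" using hx[OF c(1)] c(1) by auto
  qed
  have h0: "0 \<le> ?hi" using ra g by simp
  have up: "real (card ?S) \<le> ?hi + 1"
  proof -
    have "card ?S \<le> card {c\<in>{1..a}. real c - 1 < ?hi}" by (intro card_mono sub1) auto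
    then show ?thesis using card_lt_upper[OF h0, of a] by linarith
  qed
  have "real a * \<gamma> \<le> real a" using g ra by simp
  then have lo0: "?lo \<le> real a" using ra by (smt (verit) divide_nonneg_pos)
  have low: "?lo \<le> real (card ?S)"
  proof -
    have "card {c\<in>{1..a}. real c - 1 < ?lo} \<le> card ?S" by (intro card_mono sub2) auto
    then show ?thesis using card_lt_lower[OF lo0] by linarith
  qed
  have "1 / (2 * real a) \<le> 1/2" using ra by (simp add: field_simps)
  moreover have "0 \<le> 1 / (2 * real a)" using ra by simp
  ultimately show ?thesis using up low by linarith
qed

lemma card_split:
  "card {k\<in>{1..m+r::nat}. P k} = card {k\<in>{1..m}. P k} + card {c\<in>{1..r}. P (m+c)}"
proof -
  have e: "{k\<in>{1..m+r::nat}. P k} = {k\<in>{1..m}. P k} \<union> (\<lambda>c. m + c) ` {c\<in>{1..r}. P (m+c)}"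
  proof (rule set_eqI, rule iffI)
    fix k assume "k \<in> {k\<in>{1..m+r::nat}. P k}"
    then show "k \<in> {k\<in>{1..m}. P k} \<union> (\<lambda>c. m + c) ` {c\<in>{1..r}. P (m+c)}"
      by (cases "k \<le> m") (auto intro!: image_eqI[of _ _ "k - m"])
  qed auto
  have "card ({k\<in>{1..m}. P k} \<union> (\<lambda>c. m + c) ` {c\<in>{1..r}. P (m+c)}) =
        card {k\<in>{1..m}. P k} + card ((\<lambda>c. m + c) ` {c\<in>{1..r}. P (m+c)})"
    by (rule card_Un_disjoint) auto
  also have "card ((\<lambda>c. m + c) ` {c\<in>{1..r}. P (m+c)}) = card {c\<in>{1..r}. P (m+c)}"
    by (rule card_image) (auto simp: inj_on_def)
  finally show ?thesis using e by simp
qed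



definition Dv :: "(nat \<Rightarrow> int) \<Rightarrow> (nat \<times> nat \<times> nat \<Rightarrow> int) \<Rightarrow> real \<Rightarrow> nat \<Rightarrow> real" where
  "Dv q F g n = real (card {k\<in>{1..n}. y_F q F k \<in> {0..<g}}) - real n * g"

lemma pattern_y:
  assumes Q: "Q_special q F" and a: "a \<ge> 1" "1 \<le> b" "b \<le> l_seq q a" and c: "c \<in> {1..a}"
  shows "0 \<le> y_F q F (L_seq q (a-1) + (b-1)*a + c) \<and>
    \<bar>y_F q F (L_seq q (a-1) + (b-1)*a + c) - (real c - 1) / real a\<bar> \<le> 1 / (2 * real a ^ 2)"
proof -
  let ?n = "L_seq q (a-1) + (b-1)*a + c"
  have inv: "phi_Q_inv q ?n = (a,b,c)" using phi_inv[OF a] c by auto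
  have ph: "phi_Q q (a,b,c) = ?n" by (simp add: phi_Q_def)
  have y: "y_F q F ?n = real_of_int (F (a,b,c)) / real_of_int (q (phi_Q q (a,b,c)))"
    using inv ph by (simp add: y_F_def E_F_def)
  have mem: "(a,b,c) \<in> S_Q q" using a c by (simp add: S_Q_def)
  have ra: "real a \<ge> 1" using a by simp
  have pos: "0 \<le> 1 / (2 * real a ^ 2)" by simp
  show ?thesis
  proof (cases "c = 1")
    case True
    then have "F (a,b,c) = 0" using Q mem unfolding Q_special_def by auto
    then show ?thesis using y True pos by simp
  next
    case False
    then have "c > 1" using c by auto
    then have I: "y_F q F ?n \<in> {(real c - 1) / real a - 1 / (2 * real a ^ 2) ..
             (real c - 1) / real a + 1 / (2 * real a ^ 2)}"
      using Q mem y unfolding Q_special_def by auto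
    have "1 / real a \<le> (real c - 1) / real a" using \<open>c > 1\<close> ra by (intro divide_right_mono) auto
    moreover have "1 / (2 * real a ^ 2) \<le> 1 / real a" using ra by (simp add: field_simps power2_eq_square)
    ultimately have "0 \<le> y_F q F ?n" using I by auto
    moreover have "\<bar>y_F q F ?n - (real c - 1) / real a\<bar> \<le> 1 / (2 * real a ^ 2)"
      using I by (simp add: abs_le_iff)
    ultimately show ?thesis by simp
  qed
qed

lemma Dv_step: "Dv q F g (m + r) = Dv q F g m + (real (card {c\<in>{1..r}. y_F q F (m+c) \<in> {0..<g}}) - real r * g)"
  unfolding Dv_def card_split by (simp add: algebra_simps)

lemma Dv_step_bound:
  assumes "0 < g" "g \<le> 1"
  shows "\<bar>Dv q F g (m + r) - Dv q F g m\<bar> \<le> real r"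
proof -
  have "card {c\<in>{1..r}. y_F q F (m+c) \<in> {0..<g}} \<le> card {1..r}" by (intro card_mono) auto
  then have c: "real (card {c\<in>{1..r}. y_F q F (m+c) \<in> {0..<g}}) \<le> real r" by simp
  have "real r * g \<le> real r" using assms by (simp add: mult_left_le)
  moreover have "0 \<le> real r * g" using assms by simp
  ultimately show ?thesis using c unfolding Dv_step by simp
qed

lemma Dv_inner:
  assumes Q: "Q_special q F" and g: "0 < g" "g \<le> 1" and a: "a \<ge> 1"
  shows "b \<le> l_seq q a \<Longrightarrow> \<bar>Dv q F g (L_seq q (a-1) + b*a)\<bar> \<le> \<bar>Dv q F g (L_seq q (a-1))\<bar> + 2 * real b"
proof (induction b)
  case (Suc b)
  let ?m = "L_seq q (a-1) + b*a"
  have e: "L_seq q (a-1) + Suc b * a = ?m + a" by simp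
  have px: "\<And>c. c \<in> {1..a} \<Longrightarrow> 0 \<le> y_F q F (?m + c) \<and>
      \<bar>y_F q F (?m + c) - (real c - 1) / real a\<bar> \<le> 1 / (2 * real a ^ 2)"
    using pattern_y[OF Q a, of "Suc b"] Suc.prems by (simp add: add.assoc)
  have "\<bar>real (card {c\<in>{1..a}. y_F q F (?m + c) \<in> {0..<g}}) - real a * g\<bar> \<le> 2"
    by (rule pattern_count[OF a g]) (rule px)
  moreover have "\<bar>Dv q F g ?m\<bar> \<le> \<bar>Dv q F g (L_seq q (a-1))\<bar> + 2 * real b"
    using Suc by simp
  moreover have st: "Dv q F g (L_seq q (a-1) + Suc b * a) = Dv q F g ?m +
     (real (card {c\<in>{1..a}. y_F q F (?m + c) \<in> {0..<g}}) - real a * g)"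
    unfolding e by (rule Dv_step)
  moreover have "\<bar>Dv q F g ?m + (real (card {c\<in>{1..a}. y_F q F (?m + c) \<in> {0..<g}}) - real a * g)\<bar>
     \<le> \<bar>Dv q F g ?m\<bar> + \<bar>real (card {c\<in>{1..a}. y_F q F (?m + c) \<in> {0..<g}}) - real a * g\<bar>"
    by (rule abs_triangle_ineq)
  ultimately show ?case by simp
qed (simp)

lemma Dv_outer:
  assumes Q: "Q_special q F" and g: "0 < g" "g \<le> 1"
  shows "\<bar>Dv q F g (L_seq q a)\<bar> \<le> 2 * real (\<Sum>j\<in>{1..a}. l_seq q j)"
proof (induction a)
  case 0 then show ?case by (simp add: Dv_def)
next
  case (Suc a)
  have "\<bar>Dv q F g (L_seq q (Suc a - 1) + l_seq q (Suc a) * Suc a)\<bar>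
     \<le> \<bar>Dv q F g (L_seq q (Suc a - 1))\<bar> + 2 * real (l_seq q (Suc a))"
    by (rule Dv_inner[OF Q g]) auto
  moreover have "L_seq q (Suc a - 1) + l_seq q (Suc a) * Suc a = L_seq q (Suc a)"
    by (simp add: L_Suc)
  ultimately show ?case using Suc by simp
qed

lemma Dv_bound:
  assumes Q: "Q_special q F" and g: "0 < g" "g \<le> 1" and a: "a \<ge> 1"
    and n: "L_seq q (a-1) < n" "n \<le> L_seq q a"
  shows "\<bar>Dv q F g n\<bar> \<le> 2 * real (\<Sum>j\<in>{1..a}. l_seq q j) + real a"
proof -
  define b where "b = (n - L_seq q (a-1)) div a"
  define r where "r = (n - L_seq q (a-1)) mod a"
  have nb: "n = L_seq q (a-1) + b * a + r" using n unfolding b_def r_def by simp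
  have ra: "r < a" using a unfolding r_def by simp
  have "b * a \<le> n - L_seq q (a-1)" using nb by simp
  also have "\<dots> \<le> l_seq q a * a" using n L_block[OF a, of q] mult.commute[of a "l_seq q a"] by linarith
  finally have bl: "b \<le> l_seq q a" using a by simp
  have 1: "\<bar>Dv q F g (L_seq q (a-1) + b*a)\<bar> \<le> \<bar>Dv q F g (L_seq q (a-1))\<bar> + 2 * real b"
    by (rule Dv_inner[OF Q g a bl])
  have 2: "\<bar>Dv q F g (L_seq q (a-1))\<bar> \<le> 2 * real (\<Sum>j\<in>{1..a-1}. l_seq q j)"
    by (rule Dv_outer[OF Q g])
  have 3: "\<bar>Dv q F g n - Dv q F g (L_seq q (a-1) + b*a)\<bar> \<le> real r"
    unfolding nb by (rule Dv_step_bound[OF g])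
  have s: "(\<Sum>j\<in>{1..a}. l_seq q j) = (\<Sum>j\<in>{1..a-1}. l_seq q j) + l_seq q a"
    using a by (cases a) (auto simp: sum.cl_ivl_Suc)
  have rs: "real (\<Sum>j\<in>{1..a}. l_seq q j) = real (\<Sum>j\<in>{1..a-1}. l_seq q j) + real (l_seq q a)"
    by (simp only: s of_nat_add)
  have 4: "\<bar>Dv q F g n\<bar> - \<bar>Dv q F g (L_seq q (a-1) + b*a)\<bar> \<le> \<bar>Dv q F g n - Dv q F g (L_seq q (a-1) + b*a)\<bar>"
    by (rule abs_triangle_ineq2)
  have 5: "real b \<le> real (l_seq q a)" "real r \<le> real a" using bl ra by auto
  show ?thesis using 1 2 3 4 5 rs by linarith
qed



lemma sum_split_bound:
  fixes l :: "nat \<Rightarrow> nat" and K :: real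
  assumes K: "K \<ge> 0" and lK: "\<And>j. j \<ge> j0 \<Longrightarrow> real (l j) \<le> K"
  shows "real (\<Sum>j\<in>{1..a}. l j) \<le> real (\<Sum>j<j0. l j) + K * real a"
proof -
  let ?g = "\<lambda>j. (if j < j0 then l j else 0)"
  have pw: "real (l j) \<le> real (?g j) + K" for j
    using lK[of j] K by (cases "j < j0") auto
  have "real (\<Sum>j\<in>{1..a}. l j) = (\<Sum>j\<in>{1..a}. real (l j))" by simp
  also have "\<dots> \<le> (\<Sum>j\<in>{1..a}. real (?g j) + K)" by (rule sum_mono) (rule pw)
  also have "\<dots> = real (\<Sum>j\<in>{1..a}. ?g j) + K * real a" by (simp add: sum.distrib)
  also have "(\<Sum>j\<in>{1..a}. ?g j) = (\<Sum>j\<in>{1..a} \<inter> {..<j0}. l j)"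
    by (simp add: sum.inter_restrict)
  also have "\<dots> \<le> (\<Sum>j<j0. l j)" by (rule sum_mono2) auto
  finally show ?thesis by simp
qed

lemma a_sqrt:
  assumes "a \<ge> 1" "L_seq q (a-1) < n"
  shows "real a \<le> sqrt (2 * real n) + 1"
proof -
  have "(a-1)*(a-1) \<le> (a-1)*a" by simp
  also have "(a-1)*a = (a-1)*((a-1)+1)" using assms by simp
  also have "\<dots> \<le> 2 * L_seq q (a-1)" by (rule L_quad)
  also have "\<dots> \<le> 2 * n" using assms by simp
  finally have "real (a-1) ^ 2 \<le> 2 * real n" by (simp add: power2_eq_square of_nat_mult[symmetric] del: of_nat_mult)
  then have "real (a-1) \<le> sqrt (2 * real n)" by (rule real_le_rsqrt)
  then show ?thesis using assms by simp
qed

theorem mainTheorem5: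
  fixes q :: "nat \<Rightarrow> int" and M t :: real
    and F :: "nat \<times> nat \<times> nat \<Rightarrow> int" and \<psi> :: real
  assumes "basic_seq q"
    and "infinite_in_limit q"
    and "\<forall>i::nat. i \<ge> 1 \<and> real i > t \<longrightarrow> real (nu q (i + 1)) - real (nu q i) \<le> M * real i"
    and "Q_special q F"
    and "\<psi> > 1"
  shows "eventually (\<lambda>n. star_discrepancy (y_F q F) n
           < \<psi> * sqrt (2 * real_of_int \<lceil>M + 1\<rceil>) * (2 * real_of_int \<lceil>M + 1\<rceil> + 1)
             * real n powr (-1/2)) sequentially"
proof -
  note H = assms(3)
  define K where "K = real_of_int \<lceil>M + 1\<rceil>"
  define i0 where "i0 = nat \<lceil>t\<rceil> + 1"
  have i0: "i0 \<ge> 1" "real i0 > t" unfolding i0_def by linarith+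
  have "real (nu q (i0 + 1)) - real (nu q i0) \<le> M * real i0" using H[rule_format, of i0] i0 by simp
  moreover have "nu q i0 \<le> nu q (i0 + 1)" using nu_mono[OF assms(2)] by simp
  ultimately have "0 \<le> M * real i0" by linarith
  then have M0: "M \<ge> 0" using i0 by (simp add: zero_le_mult_iff)
  have K1: "K \<ge> 1" unfolding K_def using M0 by linarith
  have MK: "M + 1 \<le> K" unfolding K_def by linarith
  define j0 where "j0 = nat \<lceil>t\<rceil> + 2"
  have lK: "real (l_seq q j) \<le> K" if jj: "j \<ge> j0" for j
  proof -
    obtain i where j: "j = Suc i" using jj j0_def by (cases j) auto
    have i1: "i \<ge> 1" using jj j j0_def by simp
    have it: "real (Suc i) > t" using jj j j0_def by linarith
    have "real (nu q (Suc i + 1)) - real (nu q (Suc i)) \<le> M * real (Suc i)"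
      using H[rule_format, of "Suc i"] it by simp
    then have "l_seq q (Suc i) = 1 \<or> real (l_seq q (Suc i)) < M + 1" by (rule l_bound[OF i1])
    then show ?thesis using K1 MK j by auto
  qed
  define C0 where "C0 = real (\<Sum>j<j0. l_seq q j)"
  have C0: "C0 \<ge> 0" unfolding C0_def by (rule of_nat_0_le_iff)
  have sumb: "real (\<Sum>j\<in>{1..a}. l_seq q j) \<le> C0 + K * real a" for a
    unfolding C0_def by (rule sum_split_bound) (use K1 lK in auto)
  define A where "A = 2 * K + 1 + 2 * C0"
  define w where "w = sqrt 2 * (2 * K + 1)"
  define W where "W = \<psi> * sqrt (2 * K) * (2 * K + 1)"
  define E where "E = A / (\<psi> - 1)"
  have A0: "A > 0" unfolding A_def using K1 C0 by simp
  have w1: "w \<ge> 1"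
  proof -
    have "sqrt 2 \<ge> 1" by simp
    moreover have "2 * K + 1 \<ge> 1" using K1 by simp
    ultimately show ?thesis unfolding w_def using mult_mono[of 1 "sqrt 2" 1 "2*K+1"] by simp
  qed
  have Ww: "W \<ge> \<psi> * w"
  proof -
    have "sqrt 2 \<le> sqrt (2 * K)" using K1 by simp
    then have "\<psi> * sqrt 2 * (2 * K + 1) \<le> \<psi> * sqrt (2 * K) * (2 * K + 1)"
      using K1 assms(5) by (intro mult_right_mono mult_left_mono) auto
    then show ?thesis unfolding W_def w_def by (simp add: mult.assoc)
  qed
  define N where "N = nat \<lceil>E ^ 2\<rceil> + 1"
  show ?thesis unfolding eventually_sequentially
  proof (intro exI[of _ N] allI impI)
    fix n assume nN: "N \<le> n"
    have n1: "n \<ge> 1" using nN N_def by simp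
    have rn: "real n > 0" using n1 by simp
    define s where "s = sqrt (real n)"
    have s0: "s > 0" unfolding s_def using rn by simp
    have ss: "s * s = real n" unfolding s_def using rn by simp
    have "E ^ 2 < real n" using nN N_def by linarith
    then have "sqrt (E ^ 2) < s" unfolding s_def by (rule real_sqrt_less_mono)
    then have sE: "E < s" by (metis abs_less_iff real_sqrt_abs)
    have As: "A < (\<psi> - 1) * s"
    proof -
      have "(\<psi> - 1) * E < (\<psi> - 1) * s" using sE assms(5) by simp
      moreover have "(\<psi> - 1) * E = A" unfolding E_def using assms(5) by simp
      ultimately show ?thesis by simp
    qed
    have key: "w * s + A < W * s"
    proof -
      have "(\<psi> - 1) * s \<le> (\<psi> - 1) * w * s" using w1 s0 assms(5) by simp
      moreover have "\<psi> * w * s \<le> W * s" using Ww s0 by simp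
      ultimately show ?thesis using As by (simp add: algebra_simps)
    qed
    obtain a where a: "a \<ge> 1" "L_seq q (a-1) < n" "n \<le> L_seq q a" using block_exists[OF n1] by blast
    have asq: "real a \<le> s * sqrt 2 + 1" using a_sqrt[OF a(1,2)] unfolding s_def by (simp add: real_sqrt_mult mult.commute)
    have Dbound: "\<bar>Dv q F g n\<bar> \<le> w * s + A" if g: "0 < g" "g \<le> 1" for g
    proof -
      have "\<bar>Dv q F g n\<bar> \<le> 2 * real (\<Sum>j\<in>{1..a}. l_seq q j) + real a"
        by (rule Dv_bound[OF assms(4) g a])
      also have "\<dots> \<le> 2 * (C0 + K * real a) + real a" using sumb[of a] by simp
      also have "\<dots> = (2 * K + 1) * real a + 2 * C0" by (simp add: algebra_simps)
      also have "\<dots> \<le> (2 * K + 1) * (s * sqrt 2 + 1) + 2 * C0"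
        using asq K1 by (intro add_right_mono mult_left_mono) auto
      also have "\<dots> = w * s + A" unfolding w_def A_def by (simp add: algebra_simps)
      finally show ?thesis .
    qed
    have sd: "star_discrepancy (y_F q F) n \<le> (w * s + A) / real n"
      unfolding star_discrepancy_def
    proof (rule cSUP_least)
      show "{0<..1::real} \<noteq> {}" by simp
    next
      fix g :: real assume "g \<in> {0<..1}"
      then have g: "0 < g" "g \<le> 1" by auto
      have "real (card {k \<in> {1..n}. y_F q F k \<in> {0..<g}}) / real n - g = Dv q F g n / real n"
        unfolding Dv_def using rn by (simp add: field_simps)
      then have "\<bar>real (card {k \<in> {1..n}. y_F q F k \<in> {0..<g}}) / real n - g\<bar> = \<bar>Dv q F g n\<bar> / real n"
        using rn by simp
      also have "\<dots> \<le> (w * s + A) / real n" using Dbound[OF g] rn by (intro divide_right_mono) auto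
      finally show "\<bar>real (card {k \<in> {1..n}. y_F q F k \<in> {0..<g}}) / real n - g\<bar> \<le> (w * s + A) / real n" .
    qed
    also have "(w * s + A) / real n < W * s / real n" using key rn by (intro divide_strict_right_mono) auto
    also have "W * s / real n = W * real n powr (-1/2)"
    proof -
      have "real n powr (-1/2) = inverse (real n powr (1/2))" using rn by (simp add: powr_minus[symmetric])
      also have "real n powr (1/2) = s" unfolding s_def using rn by (simp add: powr_half_sqrt)
      finally have e: "real n powr (-1/2) = inverse s" .
      have "W * s / real n = W * inverse s" unfolding ss[symmetric] using s0 by (simp add: field_simps)
      then show ?thesis unfolding e .
    qed
    finally show "star_discrepancy (y_F q F) n
           < \<psi> * sqrt (2 * real_of_int \<lceil>M + 1\<rceil>) * (2 * real_of_int \<lceil>M + 1\<rceil> + 1)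
             * real n powr (-1/2)" unfolding W_def K_def .
  qed
qed


end
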